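(* If a graph matroid family $\mathcal{M}$ is bounded, then it has the Lovász-Yemini property.
   Context: All graphs are finite and simple and have no isolated vertices. A graph matroid family $\mathcal{M}$ assigns to every graph $G$ a matroid $\mathcal{M}(G)$ on $E(G)$ such that (i) every graph isomorphism $V(G)\to V(H)$ induces an isomorphism $\mathcal{M}(G)\to\mathcal{M}(H)$, and (ii) for every subgraph $H$ of $G$, $\mathcal{M}(H)$ is the restriction of $\mathcal{M}(G)$ to $E(H)$. $r(G)$ is the rank of $\mathcal{M}(G)$. $\mathcal{M}$ is bounded if $r(K_n)$ is bounded in $n$. $G$ is $\mathcal{M}$-rigid if $r(G)=r(K_{V(G)})$. $\mathcal{M}$ has the Lovász-Yemini property if there is a nonnegative integer $c$ such that every $c$-connected graph is $\mathcal{M}$-rigid. *)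

theory Defs
  imports Main
begin

text \<open>A finite simple graph without isolated vertices, with vertices labelled by
natural numbers, is represented by its edge set: a finite set of 2-element sets.
Its vertex set is the union of its edges.\<close>

definition is_graph :: "nat set set \<Rightarrow> bool" where
  "is_graph G \<longleftrightarrow> finite G \<and> (\<forall>e\<in>G. card e = 2)"

definition verts :: "nat set set \<Rightarrow> nat set" where
  "verts G = \<Union>G"

definition matroid :: "'b set \<Rightarrow> ('b set \<Rightarrow> bool) \<Rightarrow> bool" where
  "matroid E indep \<longleftrightarrow> finite E \<and> indep {} \<and>
     (\<forall>I. indep I \<longrightarrow> I \<subseteq> E) \<and>
     (\<forall>I J. indep I \<longrightarrow> J \<subseteq> I \<longrightarrow> indep J) \<and>
     (\<forall>I J. indep I \<longrightarrow> indep J \<longrightarrow> card I < card J \<longrightarrow>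
        (\<exists>e\<in>J - I. indep (insert e I)))"

definition mrank :: "('b set \<Rightarrow> bool) \<Rightarrow> 'b set \<Rightarrow> nat" where
  "mrank indep X = Max {card I | I. I \<subseteq> X \<and> indep I}"

definition map_edges :: "(nat \<Rightarrow> nat) \<Rightarrow> nat set set \<Rightarrow> nat set set" where
  "map_edges f I = (\<lambda>e. f ` e) ` I"

text \<open>A graph matroid family: to every graph G a matroid (given by independence)
on E(G), invariant under graph isomorphisms and compatible with restriction to
subgraphs.  (A subgraph of a graph without isolated vertices is determined by its
edge set, which is a subset of E(G).)\<close>

definition graph_matroid_family :: "(nat set set \<Rightarrow> nat set set \<Rightarrow> bool) \<Rightarrow> bool" where
  "graph_matroid_family M \<longleftrightarrow>
     (\<forall>G. is_graph G \<longrightarrow> matroid G (M G)) \<and>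
     (\<forall>G f. is_graph G \<longrightarrow> inj_on f (verts G) \<longrightarrow>
        (\<forall>I. I \<subseteq> G \<longrightarrow> (M (map_edges f G) (map_edges f I) \<longleftrightarrow> M G I))) \<and>
     (\<forall>G H. is_graph G \<longrightarrow> H \<subseteq> G \<longrightarrow>
        (\<forall>I. I \<subseteq> H \<longrightarrow> (M H I \<longleftrightarrow> M G I)))"

definition grank :: "(nat set set \<Rightarrow> nat set set \<Rightarrow> bool) \<Rightarrow> nat set set \<Rightarrow> nat" where
  "grank M G = mrank (M G) G"

definition complete_on :: "nat set \<Rightarrow> nat set set" where
  "complete_on V = {{u, v} | u v. u \<in> V \<and> v \<in> V \<and> u \<noteq> v}"

definition K :: "nat \<Rightarrow> nat set set" where
  "K n = complete_on {0..<n}"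

definition bounded_family :: "(nat set set \<Rightarrow> nat set set \<Rightarrow> bool) \<Rightarrow> bool" where
  "bounded_family M \<longleftrightarrow> (\<exists>B. \<forall>n. grank M (K n) \<le> B)"

definition rigid :: "(nat set set \<Rightarrow> nat set set \<Rightarrow> bool) \<Rightarrow> nat set set \<Rightarrow> bool" where
  "rigid M G \<longleftrightarrow> grank M G = grank M (complete_on (verts G))"

definition connected_minus :: "nat set set \<Rightarrow> nat set \<Rightarrow> bool" where
  "connected_minus G X \<longleftrightarrow>
     (\<forall>u\<in>verts G - X. \<forall>v\<in>verts G - X.
        (u, v) \<in> {(x, y). {x, y} \<in> G \<and> x \<notin> X \<and> y \<notin> X}\<^sup>*)"

definition k_connected :: "nat \<Rightarrow> nat set set \<Rightarrow> bool" where
  "k_connected k G \<longleftrightarrow> card (verts G) \<ge> k + 1 \<and>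
     (\<forall>X. X \<subseteq> verts G \<longrightarrow> card X < k \<longrightarrow> connected_minus G X)"

definition lovasz_yemini :: "(nat set set \<Rightarrow> nat set set \<Rightarrow> bool) \<Rightarrow> bool" where
  "lovasz_yemini M \<longleftrightarrow> (\<exists>c. \<forall>G. is_graph G \<longrightarrow> k_connected c G \<longrightarrow> rigid M G)"

end

theory Submission
  imports Defs
begin

definition Mat :: "nat \<Rightarrow> nat set set" where
  "Mat m = (\<lambda>i. {2*i, 2*i+1}) ` {..<m}"

lemma Mat_graph: "is_graph (Mat m)"
  unfolding is_graph_def Mat_def by auto

lemma verts_Mat: "verts (Mat m) = {0..<2*m}"
proof
  show "verts (Mat m) \<subseteq> {0..<2*m}" unfolding verts_def Mat_def by auto
  show "{0..<2*m} \<subseteq> verts (Mat m)"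
  proof
    fix x assume "x \<in> {0..<2*m}"
    then have "x div 2 < m" "x = 2*(x div 2) \<or> x = 2*(x div 2)+1" by auto
    then show "x \<in> verts (Mat m)" unfolding verts_def Mat_def by blast
  qed
qed

lemma Mat_sub_K: "Mat m \<subseteq> K (2*m)"
  unfolding Mat_def K_def complete_on_def by fastforce

lemma Mat_Suc: "Mat (Suc m) = insert {2*m, 2*m+1} (Mat m)"
  by (simp add: Mat_def lessThan_Suc)

lemma e0_notin: "{2*m, 2*m+1} \<notin> Mat m"
proof
  assume "{2*m, 2*m+1} \<in> Mat m"
  then obtain i where "i < m" "{2*m, 2*m+1} = {2*i, 2*i+(1::nat)}" unfolding Mat_def by auto
  then have "2*m \<in> {2*i, 2*i+(1::nat)}" by blast
  then show False using \<open>i < m\<close> by auto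
qed

lemma complete_graph: "finite V \<Longrightarrow> is_graph (complete_on V)"
proof -
  assume f: "finite V"
  have "complete_on V \<subseteq> Pow V" unfolding complete_on_def by auto
  then have "finite (complete_on V)" using f by (meson finite_Pow_iff finite_subset)
  moreover have "\<forall>e\<in>complete_on V. card e = 2" unfolding complete_on_def by auto
  ultimately show ?thesis unfolding is_graph_def by auto
qed

lemma mrank_props:
  assumes "finite X" "indep {}"
  shows "\<exists>I. I \<subseteq> X \<and> indep I \<and> card I = mrank indep X"
    and "\<And>J. J \<subseteq> X \<Longrightarrow> indep J \<Longrightarrow> card J \<le> mrank indep X"
proof -
  let ?S = "{card I | I. I \<subseteq> X \<and> indep I}"
  have "?S \<subseteq> card ` Pow X" by auto
  then have fin: "finite ?S" using assms(1) by (meson finite_Pow_iff finite_imageI finite_subset)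
  have ne: "?S \<noteq> {}" using assms(2) by auto
  have "mrank indep X \<in> ?S" unfolding mrank_def using Max_in[OF fin ne] .
  then show "\<exists>I. I \<subseteq> X \<and> indep I \<and> card I = mrank indep X" by auto
  show "\<And>J. J \<subseteq> X \<Longrightarrow> indep J \<Longrightarrow> card J \<le> mrank indep X"
    unfolding mrank_def using fin by (intro Max_ge) auto
qed

lemma map_edges_insert: "map_edges f (insert x S) = insert (f ` x) (map_edges f S)"
  by (simp add: map_edges_def)

lemma matroid_aug:
  assumes "matroid E indep" "indep I" "indep J" "card I < card J"
  shows "\<exists>e\<in>J - I. indep (insert e I)"
proof -
  have "\<forall>I J. indep I \<longrightarrow> indep J \<longrightarrow> card I < card J \<longrightarrow>
        (\<exists>e\<in>J - I. indep (insert e I))"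
    using assms(1) unfolding matroid_def by (elim conjE)
  then show ?thesis using assms(2-4) by blast
qed

lemma matroid_down:
  assumes "matroid E indep" "indep I" "J \<subseteq> I"
  shows "indep J"
proof -
  have "\<forall>I J. indep I \<longrightarrow> J \<subseteq> I \<longrightarrow> indep J"
    using assms(1) unfolding matroid_def by (elim conjE)
  then show ?thesis using assms(2-3) by blast
qed

lemma matroid_extend:
  assumes m: "matroid E indep"
  shows "indep A \<Longrightarrow> indep I \<Longrightarrow> card A \<le> card I \<Longrightarrow>
     \<exists>C. A \<subseteq> C \<and> C \<subseteq> A \<union> I \<and> indep C \<and> card C = card I"
proof (induction "card I - card A" arbitrary: A)
  case 0
  then have "card A = card I" by simp
  then show ?case using 0 by blast
next
  case (Suc n)
  note aug = matroid_aug[OF m]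
  have subE: "\<And>I. indep I \<Longrightarrow> I \<subseteq> E" and finE: "finite E"
    using m unfolding matroid_def by (elim conjE, blast)+
  have lt: "card A < card I" using Suc.hyps(2) by simp
  obtain e where e: "e \<in> I - A" "indep (insert e A)"
    using aug[OF Suc.prems(1,2) lt] by blast
  have "finite A" using subE[OF Suc.prems(1)] finE by (rule finite_subset)
  then have c: "card (insert e A) = Suc (card A)" using e(1) by simp
  have h2: "n = card I - card (insert e A)" using Suc.hyps(2) c by simp
  have h3: "card (insert e A) \<le> card I" using c lt by simp
  obtain C where C: "insert e A \<subseteq> C" "C \<subseteq> insert e A \<union> I" "indep C" "card C = card I"
    using Suc.hyps(1)[OF h2 e(2) Suc.prems(2) h3] by blast
  have "A \<subseteq> C" using C(1) by blast
  moreover have "C \<subseteq> A \<union> I" using C(2) e(1) by blast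
  ultimately show ?case using C(3,4) by blast
qed

lemma finite_verts: "is_graph G \<Longrightarrow> finite (verts G)"
  unfolding is_graph_def verts_def
  by (metis card.infinite finite_Union zero_neq_numeral)

lemma graph_sub_complete: "is_graph G \<Longrightarrow> G \<subseteq> complete_on (verts G)"
proof
  fix e assume G: "is_graph G" and e: "e \<in> G"
  then have "card e = 2" unfolding is_graph_def by auto
  then obtain x y where "e = {x, y}" "x \<noteq> y" by (meson card_2_iff)
  then show "e \<in> complete_on (verts G)" using e unfolding complete_on_def verts_def by blast
qed

lemma matching_exists:
  assumes G: "is_graph G" and kc: "k_connected c G" and uv: "u \<in> verts G" "v \<in> verts G"
  shows "2*k < c \<Longrightarrow> \<exists>g. inj_on g {0..<2*k} \<and> u \<notin> g ` {0..<2*k} \<and> v \<notin> g ` {0..<2*k}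
     \<and> (\<forall>i<k. {g (2*i), g (2*i+1)} \<in> G)"
proof (induction k)
  case 0
  then show ?case by auto
next
  case (Suc k)
  then obtain g where g: "inj_on g {0..<2*k}" "u \<notin> g ` {0..<2*k}" "v \<notin> g ` {0..<2*k}"
     "\<forall>i<k. {g (2*i), g (2*i+1)} \<in> G" by auto
  define S where "S = g ` {0..<2*k} \<union> {u, v}"
  have finV: "finite (verts G)" using G by (rule finite_verts)
  have Ssub: "S \<subseteq> verts G"
  proof -
    have "g x \<in> verts G" if "x < 2*k" for x
    proof -
      have "x div 2 < k" using that by auto
      then have "{g (2*(x div 2)), g (2*(x div 2)+1)} \<in> G" using g(4) by auto
      moreover have "x = 2*(x div 2) \<or> x = 2*(x div 2)+1" by auto
      ultimately show ?thesis unfolding verts_def by auto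
    qed
    then show ?thesis using uv unfolding S_def by auto
  qed
  have card_2uv: "card {u,v} \<le> 2" by (cases "u = v") auto
  have cS: "card S \<le> 2*k + 2"
  proof -
    have "card S \<le> card (g ` {0..<2*k}) + card {u,v}" unfolding S_def by (rule card_Un_le)
    also have "\<dots> \<le> 2*k + 2" using card_image_le[of "{0..<2*k}" g] card_2uv by auto
    finally show ?thesis .
  qed
  have ck: "2*k+2 < c" using Suc.prems by simp
  have cV: "card (verts G) \<ge> c + 1" using kc unfolding k_connected_def by auto
  have cD: "card (verts G - S) = card (verts G) - card S"
    by (rule card_Diff_subset[OF finite_subset[OF Ssub finV] Ssub])
  have "card (verts G - S) \<ge> 2"
    unfolding cD using cS cV ck by linarith
  then obtain w y where wy: "w \<in> verts G - S" "y \<in> verts G - S" "w \<noteq> y"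
  proof -
    assume c2: "card (verts G - S) \<ge> 2"
      and th: "\<And>w y. w \<in> verts G - S \<Longrightarrow> y \<in> verts G - S \<Longrightarrow> w \<noteq> y \<Longrightarrow> thesis"
    obtain T where T: "T \<subseteq> verts G - S" "card T = 2" "finite T"
      by (rule obtain_subset_with_card_n[OF c2])
    obtain a b where ab: "T = {a, b}" "a \<noteq> b" using T(2) by (meson card_2_iff)
    show thesis using th[of a b] T(1) ab by blast
  qed
  have "card S < c" using cS ck by linarith
  then have "connected_minus G S" using kc Ssub unfolding k_connected_def by blast
  then have "(w, y) \<in> {(x, y). {x, y} \<in> G \<and> x \<notin> S \<and> y \<notin> S}\<^sup>*"
    using wy unfolding connected_minus_def by auto
  then obtain z where z: "{w, z} \<in> G" "w \<notin> S" "z \<notin> S"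
    using wy(3) by (cases rule: converse_rtranclE) auto
  have "w \<noteq> z" using z(1) G unfolding is_graph_def by fastforce
  define g' where "g' = g(2*k := w, 2*k+1 := z)"
  have eqg: "g' x = g x" if "x < 2*k" for x using that unfolding g'_def by auto
  have img: "g' ` {0..<2*k} = g ` {0..<2*k}" using eqg by auto
  have set: "{0..<2*Suc k} = insert (2*k) (insert (2*k+1) {0..<2*k})" by auto
  have inj: "inj_on g' {0..<2*k}" using inj_on_cong[of "{0..<2*k}" g g'] g(1) eqg by simp
  have wz: "w \<notin> g' ` {0..<2*k}" "z \<notin> g' ` {0..<2*k}" using z img unfolding S_def by auto
  have g'w: "g' (2*k) = w" "g' (2*k+1) = z" unfolding g'_def by auto
  have r1: "inj_on g' {0..<2*Suc k}" unfolding set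
    using inj wz g'w \<open>w \<noteq> z\<close> by (simp add: inj_on_insert)
  have r2: "u \<notin> g' ` {0..<2*Suc k}" "v \<notin> g' ` {0..<2*Suc k}"
    unfolding set using g(2,3) img z g'w unfolding S_def by auto
  have r3: "\<forall>i<Suc k. {g' (2*i), g' (2*i+1)} \<in> G"
  proof (intro allI impI)
    fix i assume "i < Suc k"
    then show "{g' (2*i), g' (2*i+1)} \<in> G"
      using g(4) z(1) by (cases "i = k") (auto simp: g'_def less_Suc_eq)
  qed
  show ?case by (rule exI[of _ g'], intro conjI r1 r2 r3)
qed

theorem lemma3p12:
  assumes "graph_matroid_family M"
    and "bounded_family M"
  shows "lovasz_yemini M"
proof -
  note D = assms(1)[unfolded graph_matroid_family_def]
  note mat = D[THEN conjunct1, rule_format]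
  note iso = D[THEN conjunct2, THEN conjunct1, rule_format]
  note res = D[THEN conjunct2, THEN conjunct2, rule_format]
  have sub_graph: "is_graph H" if "is_graph G" "H \<subseteq> G" for G H
  proof -
    have "finite H" using that unfolding is_graph_def by (meson finite_subset)
    moreover have "\<forall>e\<in>H. card e = 2" using that unfolding is_graph_def by blast
    ultimately show ?thesis unfolding is_graph_def by blast
  qed
  have emp: "M G {}" if "is_graph G" for G
    using mat[OF that, unfolded matroid_def] by (elim conjE)
  have fing: "\<And>G. is_graph G \<Longrightarrow> finite G" unfolding is_graph_def by blast
  have mono: "grank M H \<le> grank M G" if "is_graph G" "H \<subseteq> G" for G H
  proof -
    have gH: "is_graph H" using sub_graph that by blast
    obtain I where I: "I \<subseteq> H" "M H I" "card I = grank M H"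
      using mrank_props(1)[where indep="M H", OF fing[OF gH] emp[OF gH]] unfolding grank_def by blast
    have "M G I" using res[OF that I(1)] I(2) by blast
    then have "card I \<le> grank M G" unfolding grank_def
      using mrank_props(2)[where indep="M G", OF fing[OF that(1)] emp[OF that(1)]] I(1) that(2) by blast
    then show ?thesis using I(3) by simp
  qed
  obtain B where B: "\<And>n. grank M (K n) \<le> B" using assms(2) unfolding bounded_family_def by blast
  define \<rho> where "\<rho> m = grank M (Mat m)" for m
  have \<rho>B: "\<rho> m \<le> B" for m
  proof -
    have "is_graph (K (2*m))" unfolding K_def by (rule complete_graph) simp
    then have "\<rho> m \<le> grank M (K (2*m))" unfolding \<rho>_def using mono Mat_sub_K by blast
    then show ?thesis using B[of "2*m"] by simp
  qed
  have "\<exists>m0. \<rho> (Suc m0) \<le> \<rho> m0"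
  proof (rule ccontr)
    assume "\<not> ?thesis"
    then have h: "\<rho> m < \<rho> (Suc m)" for m by (simp add: not_le)
    have "m \<le> \<rho> m" for m
    proof (induction m)
      case (Suc m) then show ?case using h[of m] by simp
    qed simp
    then have "Suc B \<le> \<rho> (Suc B)" by blast
    then show False using \<rho>B[of "Suc B"] by simp
  qed
  then obtain m0 where m0: "\<rho> (Suc m0) \<le> \<rho> m0" by blast
  define Mp where "Mp = Mat (Suc m0)"
  define e0 where "e0 = {2*m0, 2*m0+(1::nat)}"
  have gMp: "is_graph Mp" unfolding Mp_def by (rule Mat_graph)
  obtain A0 where A0: "A0 \<subseteq> Mat m0" "M Mp A0" "\<not> M Mp (insert e0 A0)"
  proof -
    obtain A0 where A: "A0 \<subseteq> Mat m0" "M (Mat m0) A0" "card A0 = \<rho> m0"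
      using mrank_props(1)[where indep="M (Mat m0)", OF fing[OF Mat_graph] emp[OF Mat_graph]] unfolding grank_def \<rho>_def
      by blast
    have sub: "Mat m0 \<subseteq> Mp" unfolding Mp_def Mat_Suc by blast
    have "M Mp A0" using res[OF gMp sub A(1)] A(2) by blast
    moreover have "\<not> M Mp (insert e0 A0)"
    proof
      assume a: "M Mp (insert e0 A0)"
      have "e0 \<notin> A0" using A(1) e0_notin unfolding e0_def by blast
      moreover have "finite A0" using A(1) fing[OF Mat_graph] finite_subset by blast
      ultimately have "card (insert e0 A0) = Suc (\<rho> m0)" using A(3) by simp
      moreover have "insert e0 A0 \<subseteq> Mp" using sub A(1) unfolding Mp_def e0_def Mat_Suc by blast
      ultimately have "Suc (\<rho> m0) \<le> mrank (M Mp) Mp" using a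
        mrank_props(2)[where indep="M Mp", OF fing[OF gMp] emp[OF gMp]] by metis
      moreover have "mrank (M Mp) Mp = \<rho> (Suc m0)" by (simp add: \<rho>_def grank_def Mp_def)
      ultimately have "Suc (\<rho> m0) \<le> \<rho> (Suc m0)" by simp
      then show False using m0 by simp
    qed
    ultimately show ?thesis using that A(1) by blast
  qed
  show ?thesis unfolding lovasz_yemini_def
  proof (intro exI[of _ "2*m0+3"] allI impI)
    fix G assume G: "is_graph G" and kc: "k_connected (2*m0+3) G"
    define W where "W = complete_on (verts G)"
    have gW: "is_graph W" unfolding W_def using complete_graph finite_verts G by blast
    have GW: "G \<subseteq> W" unfolding W_def using graph_sub_complete G by blast
    have resW: "\<And>J. J \<subseteq> G \<Longrightarrow> M G J \<longleftrightarrow> M W J" using res[OF gW GW] by blast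
    have mW: "matroid W (M W)" using mat gW by blast
    obtain I where I: "I \<subseteq> G" "M G I" "card I = grank M G"
      using mrank_props(1)[where indep="M G", OF fing[OF G] emp[OF G]] unfolding grank_def by blast
    have Imax: "card J \<le> card I" if "J \<subseteq> G" "M W J" for J
    proof -
      have "M G J" using resW[OF that(1)] that(2) by blast
      then have "card J \<le> mrank (M G) G"
        using mrank_props(2)[where indep="M G", OF fing[OF G] emp[OF G]] that(1) by blast
      then show ?thesis using I(3) unfolding grank_def by simp
    qed
    have finI: "finite I" using I(1) fing[OF G] finite_subset by blast
    have MWI: "M W I" using resW I by blast
    have claim: "card J \<le> card I" if J: "J \<subseteq> W" "M W J" for J
    proof (rule ccontr)
      assume "\<not> ?thesis"
      then obtain e where e: "e \<in> J - I" "M W (insert e I)"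
        using matroid_aug[OF mW MWI J(2)] by (meson not_le)
      have cI: "card (insert e I) = Suc (card I)" using e finI by simp
      have eG: "e \<notin> G"
      proof
        assume "e \<in> G"
        then have "card (insert e I) \<le> card I" using Imax[of "insert e I"] I(1) e by blast
        then show False using cI by simp
      qed
      have "e \<in> W" using e J by blast
      then obtain u v where uv: "e = {u, v}" "u \<noteq> v" "u \<in> verts G" "v \<in> verts G"
        unfolding W_def complete_on_def by blast
      obtain g where g: "inj_on g {0..<2*m0}" "u \<notin> g ` {0..<2*m0}" "v \<notin> g ` {0..<2*m0}"
        "\<forall>i<m0. {g (2*i), g (2*i+1)} \<in> G"
        using matching_exists[OF G kc uv(3,4), of m0] by auto
      define h where "h = g(2*m0 := u, 2*m0+1 := v)"
      have eqh: "h x = g x" if "x < 2*m0" for x using that unfolding h_def by auto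
      have set: "{0..<2*Suc m0} = insert (2*m0) (insert (2*m0+1) {0..<2*m0})" by auto
      have img: "h ` {0..<2*m0} = g ` {0..<2*m0}" using eqh by auto
      have inj0: "inj_on h {0..<2*m0}" using inj_on_cong[of "{0..<2*m0}" g h] g(1) eqh by simp
      have injh: "inj_on h (verts Mp)" unfolding Mp_def verts_Mat set
        using inj0 img g(2,3) uv(2) by (auto simp: h_def)
      have he0: "map_edges h {e0} = {e}" unfolding map_edges_def e0_def h_def uv(1) by auto
      have hMat: "map_edges h (Mat m0) \<subseteq> G"
      proof
        fix x assume "x \<in> map_edges h (Mat m0)"
        then obtain i where i: "i < m0" "x = h ` {2*i, 2*i+1}"
          unfolding map_edges_def Mat_def by auto
        then have "x = {g (2*i), g (2*i+1)}" using eqh by auto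
        then show "x \<in> G" using g(4) i(1) by auto
      qed
      define H where "H = map_edges h Mp"
      have he0': "h ` e0 = e" using he0 unfolding map_edges_def by simp
      have Heq: "H = insert e (map_edges h (Mat m0))"
        unfolding H_def Mp_def Mat_Suc e0_def[symmetric] map_edges_insert he0' ..
      have HW: "H \<subseteq> W" using Heq hMat GW \<open>e \<in> W\<close> by blast
      define A where "A = map_edges h A0"
      have AG: "A \<subseteq> G" unfolding A_def using A0(1) hMat unfolding map_edges_def by blast
      have A0Mp: "A0 \<subseteq> Mp" using A0(1) unfolding Mp_def Mat_Suc by blast
      have AH: "A \<subseteq> H" unfolding A_def H_def map_edges_def using A0Mp by blast
      have e0Mp: "insert e0 A0 \<subseteq> Mp" using A0Mp unfolding Mp_def Mat_Suc e0_def by blast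
      have ins: "map_edges h (insert e0 A0) = insert e A"
        unfolding A_def map_edges_insert he0' ..
      have "M H A" using iso[OF gMp injh A0Mp] A0(2) unfolding H_def A_def by blast
      then have MWA: "M W A" using res[OF gW HW AH] by blast
      have "M H (insert e A) \<longleftrightarrow> M Mp (insert e0 A0)"
        using iso[OF gMp injh e0Mp] unfolding ins H_def .
      then have "\<not> M H (insert e A)" using A0(3) by simp
      moreover have "insert e A \<subseteq> H" using AH Heq by blast
      ultimately have nMWeA: "\<not> M W (insert e A)" using res[OF gW HW] by blast
      have "card A \<le> card I" using Imax AG MWA by blast
      then obtain C where C: "A \<subseteq> C" "C \<subseteq> A \<union> I" "M W C" "card C = card I"
        using matroid_extend[OF mW MWA MWI] by blast
      have CG: "C \<subseteq> G" using C(2) AG I(1) by blast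
      have "card C < card (insert e I)" using C(4) cI by simp
      then obtain f where f: "f \<in> insert e I - C" "M W (insert f C)"
        using matroid_aug[OF mW C(3) e(2)] by blast
      have finC: "finite C" using CG fing[OF G] finite_subset by blast
      show False
      proof (cases "f = e")
        case True
        have "insert e A \<subseteq> insert f C" using True C(1) by blast
        then have "M W (insert e A)" by (rule matroid_down[OF mW f(2)])
        then show False using nMWeA by blast
      next
        case False
        then have "f \<in> I" using f(1) by blast
        then have "card (insert f C) \<le> card I" using Imax[of "insert f C"] CG I(1) f(2) by blast
        then show False using f(1) finC C(4) by simp
      qed
    qed
    obtain J where J: "J \<subseteq> W" "M W J" "card J = grank M W"
      using mrank_props(1)[where indep="M W", OF fing[OF gW] emp[OF gW]] unfolding grank_def by blast
    have "card I \<le> grank M W" using mrank_props(2)[where indep="M W", OF fing[OF gW] emp[OF gW]] GW I(1) MWI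
      unfolding grank_def by blast
    then show "rigid M G" unfolding rigid_def W_def[symmetric] using claim[OF J(1,2)] J(3) I(3)
      by simp
  qed
qed

end
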